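(* Let $\omega\in S_n$ and $1\le i<j\le n$ with $c_i(\omega),c_j(\omega)>0$. If $m_{i,p}(\omega)>m_{j,q}(\omega)$ for some $p\in[c_i(\omega)]$ and $q\in[c_j(\omega)]$, then $c_j(\omega)\ge c_i(\omega)+q-p$.
   Context: Permutations $\omega\in S_n$ are written in one-line notation. Let ${\rm Inv}(\omega)=\{(i,j): 1\le i<j\le n,\ \omega(i)>\omega(j)\}$, $c_i(\omega)=\#\{j: i<j\le n,\ \omega(i)>\omega(j)\}$, and for $i<j$, $c_{i,j}(\omega)=\#\{k: i<k<j,\ \omega(i)>\omega(k)\}$; $[m]=\{1,\dots,m\}$. For $i$ with $c_i(\omega)>0$ and $x\in[c_i(\omega)]$, $m_{i,x}(\omega)\in\mathbb{N}^n$ has $j$-th coordinate $0$ if $j<i$; $x$ if $j=i$; $0$ if $j>i$ and $(i,j)\in{\rm Inv}(\omega)$; $\max\{0,x-c_{i,j}(\omega)\}$ if $j>i$ and $(i,j)\notin{\rm Inv}(\omega)$. Comparisons are strict comparisons in the product order on $\mathbb{N}^n$. *)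

theory Defs
  imports "HOL-Combinatorics.Permutations"
begin

text \<open>Permutations of [n] = {1..n} are functions w :: nat => nat with w permutes {1..n}.
 Vectors in N^n are functions nat => nat, with only coordinates 1..n relevant.\<close>

definition inv_set :: "nat \<Rightarrow> (nat \<Rightarrow> nat) \<Rightarrow> (nat \<times> nat) set" where
  "inv_set n w = {(i, j). 1 \<le> i \<and> i < j \<and> j \<le> n \<and> w i > w j}"

definition code :: "nat \<Rightarrow> (nat \<Rightarrow> nat) \<Rightarrow> nat \<Rightarrow> nat" where
  "code n w i = card {j. i < j \<and> j \<le> n \<and> w i > w j}"

definition code2 :: "(nat \<Rightarrow> nat) \<Rightarrow> nat \<Rightarrow> nat \<Rightarrow> nat" where
  "code2 w i j = card {k. i < k \<and> k < j \<and> w i > w k}"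

definition mvec :: "nat \<Rightarrow> (nat \<Rightarrow> nat) \<Rightarrow> nat \<Rightarrow> nat \<Rightarrow> (nat \<Rightarrow> nat)" where
  "mvec n w i x = (\<lambda>j. if j < i then 0
                        else if j = i then x
                        else if (i, j) \<in> inv_set n w then 0
                        else x - code2 w i j)"
  \<comment> \<open>natural-number subtraction truncates, so x - c = max 0 (x - c)\<close>

definition vec_less :: "nat \<Rightarrow> (nat \<Rightarrow> nat) \<Rightarrow> (nat \<Rightarrow> nat) \<Rightarrow> bool" where
  "vec_less n u v \<longleftrightarrow> (\<forall>k\<in>{1..n}. u k \<le> v k) \<and> (\<exists>k\<in>{1..n}. u k \<noteq> v k)"

end

theory Submission
  imports Defs
begin

theorem mainTheorem5:
  fixes n :: nat and w :: "nat \<Rightarrow> nat" and i j p q :: nat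
  assumes "w permutes {1..n}"
    and "1 \<le> i" "i < j" "j \<le> n"
    and "code n w i > 0" "code n w j > 0"
    and "p \<in> {1..code n w i}" "q \<in> {1..code n w j}"
    and "vec_less n (mvec n w j q) (mvec n w i p)"
  shows "int (code n w j) \<ge> int (code n w i) + int q - int p"
proof -
  have jn: "j \<in> {1..n}" using assms(2-4) by auto
  have le: "mvec n w j q j \<le> mvec n w i p j" using assms(9) jn unfolding vec_less_def by blast
  have q1: "q \<ge> 1" using assms(8) by auto
  have notinv: "(i, j) \<notin> inv_set n w"
  proof
    assume "(i, j) \<in> inv_set n w"
    then have "mvec n w i p j = 0" using assms(3) unfolding mvec_def by auto
    moreover have "mvec n w j q j = q" unfolding mvec_def by auto
    ultimately show False using le q1 by auto
  qed
  have c2: "q \<le> p - code2 w i j"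
    using le notinv assms(3) unfolding mvec_def by auto
  have "w i \<noteq> w j" using permutes_inj[OF assms(1)] assms(3) by (metis inj_eq less_irrefl)
  hence wij: "w i < w j" using notinv assms(2-4) unfolding inv_set_def by auto
  have sub: "{k. i < k \<and> k \<le> n \<and> w i > w k} \<subseteq> {k. i < k \<and> k < j \<and> w i > w k} \<union> {k. j < k \<and> k \<le> n \<and> w j > w k}"
    using wij by (auto simp: not_less_iff_gr_or_eq)
  have "code n w i \<le> card ({k. i < k \<and> k < j \<and> w i > w k} \<union> {k. j < k \<and> k \<le> n \<and> w j > w k})"
    unfolding code_def by (rule card_mono[OF _ sub]) auto
  also have "\<dots> \<le> code2 w i j + code n w j"
    unfolding code_def code2_def by (rule card_Un_le)
  finally show ?thesis using c2 q1 by linarith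
qed

end
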